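(* Let $\mu$ be a locally finite positive Borel measure on $\mathbb{R}$, fix $k\in\mathbb{N}$, and fix a dyadic grid $\mathcal{D}$ in $\mathbb{R}$. Then: (1) For every $Q\in\mathcal{D}$, \[ \dim L_{Q;k}^{2}(\mu)=\dim\big(\mathrm{Range}\,\boldsymbol{M}_{Q_{\mathrm{left}},k}\cap\mathrm{Range}\,\boldsymbol{M}_{Q_{\mathrm{right}},k}\big), \] where $Q_{\mathrm{left}},Q_{\mathrm{right}}$ are the left and right halves of $Q$. In particular, $\dim L_{Q;k}^{2}(\mu)=k$ for all $Q\in\mathcal{D}$ if and only if $\boldsymbol{M}_{Q,k}\succ0$ (positive definite) for all $Q\in\mathcal{D}$. (2) If $\boldsymbol{M}_{Q,k}\succ0$ for all $Q\in\mathcal{D}$, then for each $Q\in\mathcal{D}$ one can choose an orthonormal basis $\{a_{Q}^{\mu,\ell}\}_{\ell=1}^{k}$ of $L_{Q;k}^{2}(\mu)$ (orthonormal in $L^{2}(\mu)$) such that, in addition to $\int a_{Q}^{\mu,\ell}(x)x^{i}d\mu(x)=0$ for $0\le i\le k-1$, the following additional moment conditions hold: \[ \int a_{Q}^{\mu,\ell}(x)\,x^{i}\,d\mu(x)=0\qquad\text{for all }2\le\ell\le k\text{ and }k\le i\le k+\ell-2 . \]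
   Context: For a dyadic interval $Q$, $Q_{\mathrm{left}}$ and $Q_{\mathrm{right}}$ are its two dyadic halves. $L_{Q;k}^{2}(\mu)$ is the subspace of $L^{2}(\mu)$ consisting of functions $f=\mathbf{1}_{Q_{\mathrm{left}}}p+\mathbf{1}_{Q_{\mathrm{right}}}q$ with $p,q$ real polynomials of degree at most $k-1$ such that $\int_{Q}f(x)x^{i}d\mu(x)=0$ for $0\le i\le k-1$. For an interval $J$, $\boldsymbol{M}_{J,k}$ is the $k\times k$ matrix of moments with entries $(\boldsymbol{M}_{J,k})_{ij}=\int_{J}x^{i+j}d\mu(x)$, $0\le i,j\le k-1$, i.e. $\boldsymbol{M}_{J,k}=\int_J V_k(x)V_k(x)^{\mathrm{tr}}d\mu(x)$ with $V_k(x)=(1,x,\dots,x^{k-1})^{\mathrm{tr}}$. *)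

theory Defs
  imports "HOL-Analysis.Analysis" "HOL-Computational_Algebra.Polynomial" "HOL-Library.Function_Algebras"
begin

definition locally_finite_borel :: "real measure \<Rightarrow> bool" where
  "locally_finite_borel \<mu> \<longleftrightarrow> sets \<mu> = sets borel \<and>
     (\<forall>K. compact K \<longrightarrow> emeasure \<mu> K < \<infinity>)"

definition Q_left :: "real set \<Rightarrow> real set" where
  "Q_left Q = {Inf Q ..< (Inf Q + Sup Q) / 2}"

definition Q_right :: "real set \<Rightarrow> real set" where
  "Q_right Q = {(Inf Q + Sup Q) / 2 ..< Sup Q}"

definition dyadic_grid :: "real set set \<Rightarrow> bool" where
  "dyadic_grid D \<longleftrightarrow>
     (\<forall>Q\<in>D. \<exists>a (j::int). Q = {a ..< a + 2 powr j}) \<and>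
     (\<forall>(j::int) (x::real). \<exists>!Q. Q \<in> D \<and> x \<in> Q \<and> Sup Q - Inf Q = 2 powr j) \<and>
     (\<forall>Q\<in>D. Q_left Q \<in> D \<and> Q_right Q \<in> D)"

text \<open>The space L^2_{Q;k}(mu) (as a set of representative functions).\<close>
definition L2_Qk :: "real measure \<Rightarrow> real set \<Rightarrow> nat \<Rightarrow> (real \<Rightarrow> real) set" where
  "L2_Qk \<mu> Q k = {f. \<exists>p q :: real poly.
      (\<forall>i\<ge>k. coeff p i = 0) \<and> (\<forall>i\<ge>k. coeff q i = 0) \<and>
      f = (\<lambda>x. indicator (Q_left Q) x * poly p x + indicator (Q_right Q) x * poly q x) \<and>
      (\<forall>i<k. (LINT x:Q|\<mu>. f x * x ^ i) = 0)}"

text \<open>Linear independence in L^2(mu), i.e. modulo mu-a.e. equality, and the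
  dimension of the image of a set of functions in L^2(mu).\<close>
definition L2_indep :: "real measure \<Rightarrow> (real \<Rightarrow> real) set \<Rightarrow> bool" where
  "L2_indep \<mu> F \<longleftrightarrow> (\<forall>c. (AE x in \<mu>. (\<Sum>f\<in>F. c f * f x) = 0) \<longrightarrow> (\<forall>f\<in>F. c f = 0))"

definition L2_dim :: "real measure \<Rightarrow> (real \<Rightarrow> real) set \<Rightarrow> nat" where
  "L2_dim \<mu> S = Max {card F | F. finite F \<and> F \<subseteq> S \<and> L2_indep \<mu> F}"

text \<open>Moment matrix M_{J,k} (entries for 0 <= i,j <= k-1).\<close>
definition moment_mat :: "real measure \<Rightarrow> real set \<Rightarrow> nat \<Rightarrow> nat \<Rightarrow> nat \<Rightarrow> real" where
  "moment_mat \<mu> J k i j = (LINT x:J|\<mu>. x ^ (i + j))"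

text \<open>Vectors of R^k are represented by functions nat => real vanishing from k on.\<close>
definition vscale :: "real \<Rightarrow> (nat \<Rightarrow> real) \<Rightarrow> (nat \<Rightarrow> real)" where
  "vscale c v = (\<lambda>i. c * v i)"

definition mat_range :: "(nat \<Rightarrow> nat \<Rightarrow> real) \<Rightarrow> nat \<Rightarrow> (nat \<Rightarrow> real) set" where
  "mat_range M k = {(\<lambda>i. if i < k then (\<Sum>j<k. M i j * v j) else 0) | v. \<forall>j\<ge>k. v j = 0}"

definition pos_def :: "(nat \<Rightarrow> nat \<Rightarrow> real) \<Rightarrow> nat \<Rightarrow> bool" where
  "pos_def M k \<longleftrightarrow> (\<forall>i<k. \<forall>j<k. M i j = M j i) \<and>
     (\<forall>v. (\<exists>i<k. v i \<noteq> 0) \<longrightarrow> (\<Sum>i<k. \<Sum>j<k. v i * M i j * v j) > 0)"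

end

theory Submission
  imports Defs
begin


lemma sum_fun_apply: "(\<Sum>s\<in>S. f s) x = (\<Sum>s\<in>S. f s x)"
  by (induct S rule: infinite_finite_induct) auto

interpretation VS: vector_space vscale
  by unfold_locales (auto simp: vscale_def algebra_simps)

definition unitv :: "nat \<Rightarrow> nat \<Rightarrow> real" where
  "unitv i = (\<lambda>t. if t = i then 1 else 0)"

lemma unit_span: 
  assumes "\<forall>i\<ge>m. v i = 0"
  shows "v \<in> VS.span (unitv ` {..<m})"
proof -
  have "v = (\<Sum>i<m. vscale (v i) (unitv i))"
    using assms by (auto simp: fun_eq_iff sum_fun_apply vscale_def unitv_def if_distrib sum.delta' cong: if_cong)
  also have "\<dots> \<in> VS.span (unitv ` {..<m})"
    by (intro VS.span_sum VS.span_scale VS.span_base) auto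
  finally show ?thesis .
qed

lemma homog:
  fixes A :: "nat \<Rightarrow> nat \<Rightarrow> real"
  assumes "m < n"
  shows "\<exists>c. (\<exists>j<n. c j \<noteq> 0) \<and> (\<forall>i<m. (\<Sum>j<n. A i j * c j) = 0)"
proof -
  define col where "col j = (\<lambda>i. if i < m then A i j else 0)" for j
  show ?thesis
  proof (cases "inj_on col {..<n}")
    case False
    then obtain j j' where jj: "j < n" "j' < n" "j \<noteq> j'" "col j = col j'"
      unfolding inj_on_def by auto
    define c where "c = (\<lambda>t. if t = j then 1 else if t = j' then -1 else (0::real))"
    have "(\<Sum>t<n. A i t * c t) = 0" if "i < m" for i
    proof -
      have "(\<Sum>t<n. A i t * c t) = (\<Sum>t\<in>{j,j'}. A i t * c t)"
        by (rule sum.mono_neutral_right) (use jj in \<open>auto simp: c_def\<close>)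
      also have "\<dots> = A i j - A i j'" using jj by (simp add: c_def)
      also have "\<dots> = 0" using fun_cong[OF jj(4), of i] that by (simp add: col_def)
      finally show ?thesis .
    qed
    moreover have "c j \<noteq> 0" by (simp add: c_def)
    ultimately show ?thesis using jj by blast
  next
    case True
    have sp: "col ` {..<n} \<subseteq> VS.span (unitv ` {..<m})"
      by (auto intro!: unit_span simp: col_def)
    have "VS.dependent (col ` {..<n})"
    proof (rule ccontr)
      assume "VS.independent (col ` {..<n})"
      from VS.independent_span_bound[OF _ this sp] have "card (col ` {..<n}) \<le> card (unitv ` {..<m})"
        by auto
      also have "\<dots> \<le> m" by (metis card_image_le card_lessThan finite_lessThan)
      finally show False using True assms by (simp add: card_image)
    qed
    then obtain t u v where tu: "finite t" "t \<subseteq> col ` {..<n}" "(\<Sum>v\<in>t. vscale (u v) v) = 0" "v \<in> t" "u v \<noteq> 0"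
      unfolding VS.dependent_explicit by blast
    define c where "c j = (if col j \<in> t then u (col j) else 0)" for j
    have "(\<Sum>j<n. A i j * c j) = 0" if "i < m" for i
    proof -
      have "(\<Sum>j<n. A i j * c j) = (\<Sum>j<n. c j * col j i)"
        using that by (auto simp: col_def intro!: sum.cong)
      also have "\<dots> = (\<Sum>w\<in>col ` {..<n}. (if w \<in> t then u w else 0) * w i)"
        by (subst sum.reindex[OF True]) (simp add: c_def)
      also have "\<dots> = (\<Sum>w\<in>t. u w * w i)"
        by (rule sum.mono_neutral_cong_right) (use tu in auto)
      also have "\<dots> = (\<Sum>v\<in>t. vscale (u v) v) i"
        by (simp add: sum_fun_apply vscale_def)
      also have "\<dots> = 0" using tu by simp
      finally show ?thesis .
    qed
    moreover obtain j where "j < n" "v = col j" using tu by auto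
    then have "c j \<noteq> 0" using tu by (simp add: c_def)
    ultimately show ?thesis using \<open>j < n\<close> by blast
  qed
qed



locale setting =
  fixes \<mu> :: "real measure" and k :: nat and a b :: real
  assumes lf: "locally_finite_borel \<mu>" and ab: "a < b"
begin

definition "Q = {a..<b}"
definition "L = {a..<(a+b)/2}"
definition "R = {(a+b)/2..<b}"

lemma QL: "Q_left Q = L" and QR: "Q_right Q = R"
  using ab by (simp_all add: Q_left_def Q_right_def Q_def L_def R_def)

lemma sets_mu: "sets \<mu> = sets borel" using lf by (simp add: locally_finite_borel_def)

lemma meas_eq: "measurable \<mu> borel = measurable borel (borel::real measure)"
  by (rule measurable_cong_sets[OF sets_mu refl])


definition good :: "(real \<Rightarrow> real) \<Rightarrow> bool" where
  "good f \<longleftrightarrow> f \<in> borel_measurable borel \<and> (\<exists>B. \<forall>x. \<bar>f x\<bar> \<le> B) \<and> (\<forall>x. x \<notin> {a..b} \<longrightarrow> f x = 0)"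

lemma good_integrable: assumes "good f" shows "integrable \<mu> f"
proof -
  obtain B where B: "\<forall>x. \<bar>f x\<bar> \<le> B" and z: "\<forall>x. x \<notin> {a..b} \<longrightarrow> f x = 0"
    and m: "f \<in> borel_measurable borel"
    using assms by (auto simp: good_def)
  have fin: "emeasure \<mu> {a..b} < \<infinity>" using lf compact_Icc unfolding locally_finite_borel_def by auto
  have sets: "{a..b} \<in> sets \<mu>" using sets_mu by simp
  have "integrable \<mu> (\<lambda>x. B * indicator {a..b} x)"
    using integrable_real_indicator[OF sets fin] by (rule integrable_mult_right)
  then show ?thesis
  proof (rule Bochner_Integration.integrable_bound)
    show "f \<in> borel_measurable \<mu>" using m meas_eq by simp
    show "AE x in \<mu>. norm (f x) \<le> norm (B * indicator {a..b} x)"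
    proof (rule AE_I2)
      fix x show "norm (f x) \<le> norm (B * indicator {a..b} x)"
        using B[rule_format, of x] z[rule_format, of x] by (cases "x \<in> {a..b}") auto
    qed
  qed
qed

lemma good_meas: "good f \<Longrightarrow> f \<in> borel_measurable \<mu>"
  using meas_eq by (simp add: good_def)

lemma good_zero: "good (\<lambda>x. 0)" by (auto simp: good_def intro: exI[of _ 0])

lemma good_add: assumes "good f" "good g" shows "good (\<lambda>x. f x + g x)"
proof -
  obtain B where "\<forall>x. \<bar>f x\<bar> \<le> B" using assms by (auto simp: good_def)
  moreover obtain C where "\<forall>x. \<bar>g x\<bar> \<le> C" using assms by (auto simp: good_def)
  ultimately have "\<forall>x. \<bar>f x + g x\<bar> \<le> B + C"
    by (metis abs_triangle_ineq add_mono order_trans)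
  then show ?thesis using assms by (auto simp: good_def)
qed

lemma good_cmult: assumes "good f" shows "good (\<lambda>x. c * f x)"
proof -
  obtain B where "\<forall>x. \<bar>f x\<bar> \<le> B" using assms by (auto simp: good_def)
  then have "\<forall>x. \<bar>c * f x\<bar> \<le> \<bar>c\<bar> * B" by (simp add: abs_mult mult_left_mono)
  then show ?thesis using assms by (auto simp: good_def)
qed

lemma good_sum: "(\<And>i. i \<in> I \<Longrightarrow> good (f i)) \<Longrightarrow> good (\<lambda>x. \<Sum>i\<in>I. f i x)"
proof (induct I rule: infinite_finite_induct)
  case (insert i I)
  then show ?case using good_add[of "f i" "\<lambda>x. \<Sum>i\<in>I. f i x"] by simp
qed (auto simp: good_zero)

lemma good_mult_cont: assumes "good f" "continuous_on UNIV g" shows "good (\<lambda>x. f x * g x)"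
proof -
  obtain B where B: "\<forall>x. \<bar>f x\<bar> \<le> B" and z: "\<forall>x. x \<notin> {a..b} \<longrightarrow> f x = 0"
    using assms by (auto simp: good_def)
  have "compact (g ` {a..b})"
    using assms(2) by (intro compact_continuous_image) (auto intro: continuous_on_subset)
  then obtain C where C: "\<forall>y\<in>g ` {a..b}. norm y \<le> C" using compact_imp_bounded bounded_iff by metis
  have "\<bar>f x * g x\<bar> \<le> B * C" for x
  proof (cases "x \<in> {a..b}")
    case True
    then have "\<bar>g x\<bar> \<le> C" using C by auto
    moreover have "0 \<le> B" using B[rule_format, of x] by linarith
    ultimately show ?thesis using B by (simp add: abs_mult mult_mono')
  next
    case False
    have "0 \<le> B" using B[rule_format, of x] by linarith
    moreover have "0 \<le> C" using C ab by (metis atLeastAtMost_iff imageI less_imp_le norm_ge_zero order_trans order_refl)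
    ultimately show ?thesis using z False by simp
  qed
  moreover have "(\<lambda>x. f x * g x) \<in> borel_measurable borel"
    using assms by (intro borel_measurable_times[OF _ borel_measurable_continuous_onI]) (auto simp: good_def)
  ultimately show ?thesis using assms z by (auto simp: good_def)
qed

lemma good_mult: assumes "good f" "good g" shows "good (\<lambda>x. f x * g x)"
proof -
  obtain B where B: "\<forall>x. \<bar>f x\<bar> \<le> B" using assms by (auto simp: good_def)
  obtain C where C: "\<forall>x. \<bar>g x\<bar> \<le> C" using assms by (auto simp: good_def)
  have "\<bar>f x * g x\<bar> \<le> B * C" for x using B C
    by (simp add: abs_mult mult_mono')
  then show ?thesis using assms by (auto simp: good_def)
qed

lemma good_ind: assumes "S \<in> sets borel" "S \<subseteq> {a..b}" shows "good (indicator S)"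
  using assms by (auto simp: good_def indicator_def intro!: exI[of _ 1])

lemma LRQ_sub: "L \<subseteq> {a..b}" "R \<subseteq> {a..b}" "Q \<subseteq> {a..b}"
  by (auto simp: L_def R_def Q_def)

lemma LRQ_sets: "L \<in> sets borel" "R \<in> sets borel" "Q \<in> sets borel"
  by (auto simp: L_def R_def Q_def)

definition pv :: "(nat \<Rightarrow> real) \<Rightarrow> real \<Rightarrow> real" where
  "pv u x = (\<Sum>j<k. u j * x ^ j)"

lemma pv_cont: "continuous_on UNIV (pv u)"
  unfolding pv_def by (intro continuous_intros)

lemma pow_cont: "continuous_on UNIV (\<lambda>x::real. x ^ i)"
  by (intro continuous_intros)

lemma good_ind_pv: "J \<in> sets borel \<Longrightarrow> J \<subseteq> {a..b} \<Longrightarrow> good (\<lambda>x. indicator J x * pv u x)"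
  by (intro good_mult_cont good_ind pv_cont)

lemma good_pow: "good f \<Longrightarrow> good (\<lambda>x. f x * x ^ i)"
  by (intro good_mult_cont pow_cont)

definition Ff :: "(nat \<Rightarrow> real) \<Rightarrow> (nat \<Rightarrow> real) \<Rightarrow> real \<Rightarrow> real" where
  "Ff u v x = indicator L x * pv u x + indicator R x * pv v x"

lemma good_Ff: "good (Ff u v)"
  unfolding Ff_def using LRQ_sub LRQ_sets by (intro good_add good_ind_pv) auto

lemma poly_pv:
  assumes "\<forall>i\<ge>k. coeff p i = 0"
  shows "poly p x = pv (coeff p) x"
proof -
  define N where "N = max (Suc (degree p)) k"
  have "poly p x = (\<Sum>i<N. coeff p i * x ^ i)"
    unfolding poly_altdef N_def
    by (rule sum.mono_neutral_left) (auto simp: coeff_eq_0)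
  also have "\<dots> = pv (coeff p) x"
    unfolding pv_def N_def
    by (rule sum.mono_neutral_right) (use assms in auto)
  finally show ?thesis .
qed

definition V where "V = L2_Qk \<mu> Q k"

lemma V_char: "f \<in> V \<longleftrightarrow> (\<exists>u v. f = Ff u v) \<and> (\<forall>i<k. (LINT x|\<mu>. indicator Q x * (f x * x ^ i)) = 0)"
proof
  assume "f \<in> V"
  then obtain p q :: "real poly" where pq: "\<forall>i\<ge>k. coeff p i = 0" "\<forall>i\<ge>k. coeff q i = 0"
    "f = (\<lambda>x. indicator L x * poly p x + indicator R x * poly q x)"
    "\<forall>i<k. (LINT x:Q|\<mu>. f x * x ^ i) = 0"
    unfolding V_def L2_Qk_def QL QR by blast
  have "f = Ff (coeff p) (coeff q)"
    using pq by (auto simp: Ff_def poly_pv fun_eq_iff)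
  then show "(\<exists>u v. f = Ff u v) \<and> (\<forall>i<k. (LINT x|\<mu>. indicator Q x * (f x * x ^ i)) = 0)"
    using pq(4) by (auto simp: set_lebesgue_integral_def)
next
  assume "(\<exists>u v. f = Ff u v) \<and> (\<forall>i<k. (LINT x|\<mu>. indicator Q x * (f x * x ^ i)) = 0)"
  then obtain u v where f: "f = Ff u v" and c: "\<forall>i<k. (LINT x|\<mu>. indicator Q x * (f x * x ^ i)) = 0"
    by blast
  define p where "p = (\<Sum>j<k. monom (u j) j)"
  define q where "q = (\<Sum>j<k. monom (v j) j)"
  have cp: "coeff p i = (if i < k then u i else 0)" for i
    unfolding p_def coeff_sum by (simp add: sum.delta')
  have cq: "coeff q i = (if i < k then v i else 0)" for i
    unfolding q_def coeff_sum by (simp add: sum.delta')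
  have pp: "poly p x = pv u x" "poly q x = pv v x" for x
    unfolding p_def q_def poly_sum poly_monom pv_def by auto
  show "f \<in> V"
    unfolding V_def L2_Qk_def QL QR
    apply (rule CollectI, rule exI[of _ p], rule exI[of _ q])
    using c by (auto simp: cp cq pp f Ff_def set_lebesgue_integral_def)
qed

lemma V_good: "f \<in> V \<Longrightarrow> good f"
  using V_char good_Ff by auto

lemma Ff_zero: "x \<notin> Q \<Longrightarrow> Ff u v x = 0"
  by (auto simp: Ff_def L_def R_def Q_def indicator_def)

lemma V_zero: "f \<in> V \<Longrightarrow> x \<notin> Q \<Longrightarrow> f x = 0"
  using V_char Ff_zero by auto

end


context setting begin

lemma ind_facts:
  "indicator L x * indicator L x = (indicator L x :: real)"
  "indicator L x * indicator R x = (0::real)"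
  "indicator R x * indicator L x = (0::real)"
  "indicator R x * indicator R x = (indicator R x :: real)"
  "indicator Q x * indicator L x = (indicator L x :: real)"
  "indicator Q x * indicator R x = (indicator R x :: real)"
  by (auto simp: indicator_def L_def R_def Q_def)

lemma Ff_L: "indicator L x * (Ff u v x * x ^ i) = indicator L x * (pv u x * x ^ i)"
  by (cases "x \<in> L"; cases "x \<in> R") (auto simp: Ff_def L_def R_def)

lemma Ff_Q: "indicator Q x * (Ff u v x * x ^ i) = indicator L x * (pv u x * x ^ i) + indicator R x * (pv v x * x ^ i)"
  by (auto simp: Ff_def indicator_def L_def R_def Q_def)

lemma pv_sq: "pv w x * pv w x = (\<Sum>i<k. w i * (pv w x * x ^ i))"
proof -
  have "(\<Sum>i<k. w i * (p * x ^ i)) = p * (\<Sum>i<k. w i * x ^ i)" for p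
    by (simp add: sum_distrib_left mult_ac)
  then show ?thesis by (metis pv_def)
qed

lemma Ff_sq: "Ff u v x * Ff u v x = (\<Sum>i<k. u i * (indicator L x * (pv u x * x ^ i))) + (\<Sum>i<k. v i * (indicator R x * (pv v x * x ^ i)))"
proof -
  have "Ff u v x * Ff u v x = indicator L x * (pv u x * pv u x) + indicator R x * (pv v x * pv v x)"
    by (cases "x \<in> L"; cases "x \<in> R") (auto simp: Ff_def L_def R_def)
  also have "\<dots> = indicator L x * (\<Sum>i<k. u i * (pv u x * x ^ i)) + indicator R x * (\<Sum>i<k. v i * (pv v x * x ^ i))"
    by (simp only: pv_sq)
  also have "\<dots> = (\<Sum>i<k. u i * (indicator L x * (pv u x * x ^ i))) + (\<Sum>i<k. v i * (indicator R x * (pv v x * x ^ i)))"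
    by (simp add: sum_distrib_left mult_ac)
  finally show ?thesis .
qed

lemma good_LJ: "J \<in> {L, R, Q} \<Longrightarrow> good g \<Longrightarrow> good (\<lambda>x. indicator J x * (g x * x ^ i))"
  using LRQ_sub LRQ_sets by (intro good_mult good_ind good_pow) auto

lemma int_LJ: "J \<in> {L, R, Q} \<Longrightarrow> good g \<Longrightarrow> integrable \<mu> (\<lambda>x. indicator J x * (g x * x ^ i))"
  by (intro good_integrable good_LJ)

lemma good_pvJ: assumes "J \<in> {L, R, Q}" shows "good (\<lambda>x. indicator J x * (pv u x * x ^ i))"
proof -
  have J: "J \<in> sets borel" "J \<subseteq> {a..b}" using assms LRQ_sets LRQ_sub by auto
  have "good (\<lambda>x. (indicator J x * pv u x) * x ^ i)" by (rule good_pow[OF good_ind_pv[OF J]])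
  then show ?thesis by (simp add: mult.assoc)
qed

lemma KL:
  assumes f: "f \<in> V" and z: "\<forall>i<k. (LINT x|\<mu>. indicator L x * (f x * x ^ i)) = 0"
  shows "AE x in \<mu>. f x = 0"
proof -
  obtain u v where fu: "f = Ff u v" and c: "\<forall>i<k. (LINT x|\<mu>. indicator Q x * (f x * x ^ i)) = 0"
    using f V_char by blast
  have IL: "(LINT x|\<mu>. indicator L x * (pv u x * x ^ i)) = 0" if "i < k" for i
    using z that by (simp add: fu Ff_L)
  have IR: "(LINT x|\<mu>. indicator R x * (pv v x * x ^ i)) = 0" if "i < k" for i
  proof -
    have "0 = (LINT x|\<mu>. indicator L x * (pv u x * x ^ i) + indicator R x * (pv v x * x ^ i))"
      using c that by (simp add: fu Ff_Q)
    also have "\<dots> = (LINT x|\<mu>. indicator L x * (pv u x * x ^ i)) + (LINT x|\<mu>. indicator R x * (pv v x * x ^ i))"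
      by (intro Bochner_Integration.integral_add good_integrable good_pvJ) auto
    finally show ?thesis using IL[OF that] by simp
  qed
  have "(LINT x|\<mu>. f x * f x) = (LINT x|\<mu>. (\<Sum>i<k. u i * (indicator L x * (pv u x * x ^ i))) + (\<Sum>i<k. v i * (indicator R x * (pv v x * x ^ i))))"
    by (simp add: fu Ff_sq)
  also have "\<dots> = (\<Sum>i<k. u i * (LINT x|\<mu>. indicator L x * (pv u x * x ^ i))) + (\<Sum>i<k. v i * (LINT x|\<mu>. indicator R x * (pv v x * x ^ i)))"
  proof -
    have ig: "integrable \<mu> (\<lambda>x. indicator J x * (pv w x * x ^ i))" if "J \<in> {L, R, Q}" for J w i
      using that by (intro good_integrable good_pvJ)
    have i1: "integrable \<mu> (\<lambda>x. \<Sum>i<k. u i * (indicator L x * (pv u x * x ^ i)))"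
      using ig by (intro Bochner_Integration.integrable_sum integrable_mult_right) auto
    have i2: "integrable \<mu> (\<lambda>x. \<Sum>i<k. v i * (indicator R x * (pv v x * x ^ i)))"
      using ig by (intro Bochner_Integration.integrable_sum integrable_mult_right) auto
    show ?thesis
      unfolding Bochner_Integration.integral_add[OF i1 i2]
      using ig by (simp add: Bochner_Integration.integral_sum)
  qed
  also have "\<dots> = 0" using IL IR by simp
  finally have "(LINT x|\<mu>. f x * f x) = 0" .
  moreover have "integrable \<mu> (\<lambda>x. f x * f x)"
    using f by (intro good_integrable good_mult V_good)
  ultimately have "AE x in \<mu>. f x * f x = 0"
    using integral_nonneg_eq_0_iff_AE[of \<mu> "\<lambda>x. f x * f x"] by simp
  then show ?thesis by eventually_elim simp
qed

end


context setting begin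

lemma pv_lin: "pv (\<lambda>j. u j + c * u' j) x = pv u x + c * pv u' x"
  by (simp add: pv_def sum.distrib sum_distrib_left algebra_simps)

lemma pv_zero: "pv (\<lambda>j. 0) x = 0" by (simp add: pv_def)

lemma V_0: "(\<lambda>x. 0) \<in> V"
  unfolding V_char
proof (intro conjI)
  show "\<exists>u v. (\<lambda>x. 0) = Ff u v"
    by (intro exI[of _ "\<lambda>j. 0"]) (simp add: Ff_def pv_zero fun_eq_iff)
qed simp

lemma V_lin: assumes "f \<in> V" "g \<in> V" shows "(\<lambda>x. f x + c * g x) \<in> V"
proof -
  obtain u v where fu: "f = Ff u v" and cf: "\<forall>i<k. (LINT x|\<mu>. indicator Q x * (f x * x ^ i)) = 0"
    using assms V_char by blast
  obtain u' v' where gu: "g = Ff u' v'" and cg: "\<forall>i<k. (LINT x|\<mu>. indicator Q x * (g x * x ^ i)) = 0"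
    using assms V_char by blast
  have "(\<lambda>x. f x + c * g x) = Ff (\<lambda>j. u j + c * u' j) (\<lambda>j. v j + c * v' j)"
    by (simp add: fu gu Ff_def pv_lin fun_eq_iff algebra_simps)
  moreover have "(LINT x|\<mu>. indicator Q x * ((f x + c * g x) * x ^ i)) = 0" if "i < k" for i
  proof -
    have "(LINT x|\<mu>. indicator Q x * ((f x + c * g x) * x ^ i)) =
       (LINT x|\<mu>. indicator Q x * (f x * x ^ i) + c * (indicator Q x * (g x * x ^ i)))"
      by (simp add: algebra_simps)
    also have "\<dots> = (LINT x|\<mu>. indicator Q x * (f x * x ^ i)) + c * (LINT x|\<mu>. indicator Q x * (g x * x ^ i))"
      using assms by (subst Bochner_Integration.integral_add) (auto intro!: int_LJ V_good)
    finally show ?thesis using cf cg that by simp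
  qed
  ultimately show ?thesis unfolding V_char by blast
qed

lemma V_scale: "f \<in> V \<Longrightarrow> (\<lambda>x. c * f x) \<in> V"
  using V_lin[OF V_0, of f c] by simp

lemma V_sum: "(\<And>i. i \<in> I \<Longrightarrow> f i \<in> V) \<Longrightarrow> (\<lambda>x. \<Sum>i\<in>I. c i * f i x) \<in> V"
proof (induct I rule: infinite_finite_induct)
  case (insert i I)
  then have "(\<lambda>x. (\<Sum>i\<in>I. c i * f i x) + c i * f i x) \<in> V"
    by (intro V_lin) auto
  then show ?case using insert by (simp add: add.commute)
qed (auto simp: V_0)

definition kap :: "(real \<Rightarrow> real) \<Rightarrow> nat \<Rightarrow> real" where
  "kap f = (\<lambda>i. if i < k then LINT x|\<mu>. indicator L x * (f x * x ^ i) else 0)"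

lemma kap_sum:
  assumes "\<And>i. i \<in> I \<Longrightarrow> good (f i)"
  shows "kap (\<lambda>x. \<Sum>i\<in>I. c i * f i x) = (\<Sum>i\<in>I. vscale (c i) (kap (f i)))"
proof (rule ext)
  fix t
  show "kap (\<lambda>x. \<Sum>i\<in>I. c i * f i x) t = (\<Sum>i\<in>I. vscale (c i) (kap (f i))) t"
  proof (cases "t < k")
    case True
    have "kap (\<lambda>x. \<Sum>i\<in>I. c i * f i x) t = (LINT x|\<mu>. (\<Sum>i\<in>I. c i * (indicator L x * (f i x * x ^ t))))"
      using True by (simp add: kap_def sum_distrib_left sum_distrib_right mult_ac)
    also have "\<dots> = (\<Sum>i\<in>I. c i * (LINT x|\<mu>. indicator L x * (f i x * x ^ t)))"
      using assms by (subst Bochner_Integration.integral_sum) (auto intro!: int_LJ)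
    finally show ?thesis using True by (simp add: sum_fun_apply vscale_def kap_def)
  qed (simp add: kap_def sum_fun_apply vscale_def)
qed

lemma kap_AE:
  assumes "good f" "good g" "AE x in \<mu>. f x = g x"
  shows "kap f = kap g"
proof -
  have "(LINT x|\<mu>. indicator L x * (f x * x ^ i)) = (LINT x|\<mu>. indicator L x * (g x * x ^ i))" for i
    using assms by (intro integral_cong_AE good_meas good_LJ) auto
  note eq = this
  show ?thesis unfolding kap_def by (rule ext) (subst eq, rule refl)
qed

definition Mv :: "real set \<Rightarrow> (nat \<Rightarrow> real) \<Rightarrow> nat \<Rightarrow> real" where
  "Mv J w = (\<lambda>i. if i < k then \<Sum>j<k. moment_mat \<mu> J k i j * w j else 0)"

lemma mat_range_iff: "y \<in> mat_range (moment_mat \<mu> J k) k \<longleftrightarrow> (\<exists>w. y = Mv J w)"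
proof
  assume "y \<in> mat_range (moment_mat \<mu> J k) k"
  then show "\<exists>w. y = Mv J w" by (auto simp: mat_range_def Mv_def)
next
  assume "\<exists>w. y = Mv J w"
  then obtain w where w: "y = Mv J w" by blast
  define w' where "w' j = (if j < k then w j else 0)" for j
  have "y = (\<lambda>i. if i < k then \<Sum>j<k. moment_mat \<mu> J k i j * w' j else 0)"
    by (auto simp: w Mv_def w'_def fun_eq_iff intro!: sum.cong)
  moreover have "\<forall>j\<ge>k. w' j = 0" by (simp add: w'_def)
  ultimately show "y \<in> mat_range (moment_mat \<mu> J k) k" unfolding mat_range_def by blast
qed

lemma mom:
  assumes "J \<in> {L, R, Q}"
  shows "(LINT x|\<mu>. indicator J x * (pv u x * x ^ i)) = (\<Sum>j<k. moment_mat \<mu> J k i j * u j)"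
proof -
  have "(\<Sum>j<k. moment_mat \<mu> J k i j * u j) = (\<Sum>j<k. u j * (LINT x|\<mu>. indicator J x * (x ^ j * x ^ i)))"
    by (simp add: moment_mat_def set_lebesgue_integral_def power_add mult_ac)
  also have "\<dots> = (\<Sum>j<k. (LINT x|\<mu>. u j * (indicator J x * (x ^ j * x ^ i))))"
    by simp
  also have "\<dots> = (LINT x|\<mu>. (\<Sum>j<k. u j * (indicator J x * (x ^ j * x ^ i))))"
  proof (rule Bochner_Integration.integral_sum[symmetric])
    fix j
    have J: "J \<in> sets borel" "J \<subseteq> {a..b}" using assms LRQ_sets LRQ_sub by auto
    have "continuous_on UNIV (\<lambda>x::real. x ^ j * x ^ i)" by (intro continuous_intros)
    then have "integrable \<mu> (\<lambda>x. indicator J x * (x ^ j * x ^ i))"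
      by (intro good_integrable good_mult_cont good_ind J)
    then show "integrable \<mu> (\<lambda>x. u j * (indicator J x * (x ^ j * x ^ i)))" by simp
  qed
  also have "\<dots> = (LINT x|\<mu>. indicator J x * (pv u x * x ^ i))"
    by (simp add: pv_def sum_distrib_left sum_distrib_right mult_ac)
  finally show ?thesis by simp
qed

definition W where "W = mat_range (moment_mat \<mu> L k) k \<inter> mat_range (moment_mat \<mu> R k) k"

lemma kap_W: assumes "f \<in> V" shows "kap f \<in> W"
proof -
  obtain u v where fu: "f = Ff u v" and c: "\<forall>i<k. (LINT x|\<mu>. indicator Q x * (f x * x ^ i)) = 0"
    using assms V_char by blast
  have k1: "kap f = Mv L u"
    by (auto simp: kap_def Mv_def fu Ff_L mom fun_eq_iff)
  have "(\<Sum>j<k. moment_mat \<mu> L k i j * u j) = (\<Sum>j<k. moment_mat \<mu> R k i j * (- v j))" if "i < k" for i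
  proof -
    have "0 = (LINT x|\<mu>. indicator L x * (pv u x * x ^ i) + indicator R x * (pv v x * x ^ i))"
      using c that by (simp add: fu Ff_Q)
    also have "\<dots> = (LINT x|\<mu>. indicator L x * (pv u x * x ^ i)) + (LINT x|\<mu>. indicator R x * (pv v x * x ^ i))"
      by (intro Bochner_Integration.integral_add good_integrable good_pvJ) auto
    finally show ?thesis by (simp add: mom sum_negf) 
  qed
  then have "kap f = Mv R (\<lambda>j. - v j)" unfolding k1 by (auto simp: Mv_def)
  then show ?thesis using k1 unfolding W_def Int_iff mat_range_iff by blast
qed

lemma W_kap: assumes "w \<in> W" shows "\<exists>f\<in>V. kap f = w"
proof -
  obtain u v where u: "w = Mv L u" and v: "w = Mv R v" using assms unfolding W_def Int_iff mat_range_iff by blast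
  define f where "f = Ff u (\<lambda>j. - v j)"
  have "(LINT x|\<mu>. indicator Q x * (f x * x ^ i)) = 0" if "i < k" for i
  proof -
    have "(LINT x|\<mu>. indicator Q x * (f x * x ^ i)) = 
       (LINT x|\<mu>. indicator L x * (pv u x * x ^ i) + indicator R x * (pv (\<lambda>j. - v j) x * x ^ i))"
      by (simp add: f_def Ff_Q)
    also have "\<dots> = (LINT x|\<mu>. indicator L x * (pv u x * x ^ i)) + (LINT x|\<mu>. indicator R x * (pv (\<lambda>j. - v j) x * x ^ i))"
      by (intro Bochner_Integration.integral_add good_integrable good_pvJ) auto
    also have "\<dots> = w i - w i"
      using that fun_cong[OF u, of i] fun_cong[OF v, of i] by (simp add: mom Mv_def sum_negf)
    finally show ?thesis by simp
  qed
  then have "f \<in> V" unfolding V_char f_def by blast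
  moreover have "kap f = w"
    using u by (auto simp: kap_def Mv_def f_def Ff_L mom fun_eq_iff)
  ultimately show ?thesis by blast
qed

end


context setting begin

lemma W_sub: "w \<in> W \<Longrightarrow> \<forall>i\<ge>k. w i = 0"
  by (auto simp: W_def mat_range_iff Mv_def)

lemma W_span: "W \<subseteq> VS.span (unitv ` {..<k})"
  using W_sub unit_span by blast

lemma indep_le:
  assumes "VS.independent B" "B \<subseteq> W"
  shows "finite B \<and> card B \<le> VS.dim W"
proof -
  obtain C where C: "C \<subseteq> W" "VS.independent C" "W \<subseteq> VS.span C" "card C = VS.dim W"
    using VS.basis_exists by blast
  have fC: "finite C" using VS.independent_span_bound[OF _ C(2)] C(1) W_span by blast
  show ?thesis using VS.independent_span_bound[OF fC assms(1)] assms(2) C by auto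
qed

lemma dim_formula: "L2_dim \<mu> V = VS.dim W"
proof -
  define S where "S = {card F |F. finite F \<and> F \<subseteq> V \<and> L2_indep \<mu> F}"
  have up: "card F \<le> VS.dim W" if F: "finite F" "F \<subseteq> V" "L2_indep \<mu> F" for F
  proof -
    have key: "\<forall>h\<in>F. c h = 0" if kc: "kap (\<lambda>x. \<Sum>h\<in>F. c h * h x) = (\<lambda>i. 0)" for c
    proof -
      have "(\<lambda>x. \<Sum>h\<in>F. c h * h x) \<in> V" using F by (intro V_sum) auto
      moreover have "\<forall>i<k. (LINT x|\<mu>. indicator L x * ((\<Sum>h\<in>F. c h * h x) * x ^ i)) = 0"
      proof (intro allI impI)
        fix i assume "i < k"
        then show "(LINT x|\<mu>. indicator L x * ((\<Sum>h\<in>F. c h * h x) * x ^ i)) = 0"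
          using fun_cong[OF kc, of i] by (simp add: kap_def)
      qed
      ultimately have "AE x in \<mu>. (\<Sum>h\<in>F. c h * h x) = 0" by (rule KL)
      then show ?thesis using F(3) unfolding L2_indep_def by blast
    qed
    have inj: "inj_on kap F"
    proof (rule inj_onI, rule ccontr)
      fix f g assume fg: "f \<in> F" "g \<in> F" "kap f = kap g" "f \<noteq> g"
      define c where "c h = (if h = f then 1 else if h = g then -1 else (0::real))" for h
      have "kap (\<lambda>x. \<Sum>h\<in>F. c h * h x) = (\<Sum>h\<in>F. vscale (c h) (kap h))"
        using F by (intro kap_sum V_good) auto
      also have "\<dots> = (\<Sum>h\<in>{f,g}. vscale (c h) (kap h))"
        by (rule sum.mono_neutral_right) (use F fg in \<open>auto simp: c_def vscale_def\<close>)
      also have "\<dots> = (\<lambda>i. 0)" using fg by (auto simp: c_def vscale_def fun_eq_iff)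
      finally have "\<forall>h\<in>F. c h = 0" by (rule key)
      then show False using fg by (auto simp: c_def)
    qed
    have ind: "VS.independent (kap ` F)"
      unfolding VS.independent_explicit_finite_subsets
    proof (intro allI impI ballI)
      fix T u w assume T: "T \<subseteq> kap ` F" "finite T" "(\<Sum>v\<in>T. vscale (u v) v) = 0" "w \<in> T"
      define c where "c h = (if kap h \<in> T then u (kap h) else 0)" for h
      have "kap (\<lambda>x. \<Sum>h\<in>F. c h * h x) = (\<Sum>h\<in>F. vscale (c h) (kap h))"
        using F by (intro kap_sum V_good) auto
      also have "\<dots> = (\<Sum>v\<in>kap ` F. vscale (if v \<in> T then u v else 0) v)"
        by (subst sum.reindex[OF inj]) (simp add: c_def)
      also have "\<dots> = (\<Sum>v\<in>T. vscale (u v) v)"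
        by (rule sum.mono_neutral_cong_right) (use F T in \<open>auto simp: vscale_def fun_eq_iff\<close>)
      also have "\<dots> = (\<lambda>i. 0)" using T by (simp add: zero_fun_def)
      finally have "\<forall>h\<in>F. c h = 0" by (rule key)
      moreover obtain h where "h \<in> F" "w = kap h" using T by auto
      ultimately show "u w = 0" using T by (auto simp: c_def)
    qed
    have "kap ` F \<subseteq> W" using F kap_W by auto
    from indep_le[OF ind this] show ?thesis using card_image[OF inj] by simp
  qed
  obtain C where C: "C \<subseteq> W" "VS.independent C" "W \<subseteq> VS.span C" "card C = VS.dim W"
    using VS.basis_exists by blast
  have fC: "finite C" using indep_le C by blast
  define g where "g w = (SOME f. f \<in> V \<and> kap f = w)" for w
  have g: "g w \<in> V \<and> kap (g w) = w" if "w \<in> C" for w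
  proof -
    have "\<exists>f. f \<in> V \<and> kap f = w" using W_kap[of w] C(1) that by blast
    then show ?thesis unfolding g_def by (rule someI_ex)
  qed
  have injg: "inj_on g C"
  proof (rule inj_onI)
    fix x y assume "x \<in> C" "y \<in> C" "g x = g y"
    then show "x = y" using g[of x] g[of y] by metis
  qed
  have lo: "VS.dim W \<in> S"
  proof -
    have "L2_indep \<mu> (g ` C)"
      unfolding L2_indep_def
    proof (intro allI impI ballI)
      fix c h assume ae: "AE x in \<mu>. (\<Sum>f\<in>g ` C. c f * f x) = 0" and h: "h \<in> g ` C"
      have gs: "good (\<lambda>x. \<Sum>f\<in>g ` C. c f * f x)"
      proof (rule good_sum)
        fix f assume "f \<in> g ` C"
        then have "good f" using g V_good by auto
        then show "good (\<lambda>x. c f * f x)" by (rule good_cmult)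
      qed
      have "kap (\<lambda>x. \<Sum>f\<in>g ` C. c f * f x) = kap (\<lambda>x. 0)"
        by (rule kap_AE[OF gs good_zero ae])
      also have "\<dots> = 0" by (simp add: kap_def fun_eq_iff)
      finally have "0 = kap (\<lambda>x. \<Sum>f\<in>g ` C. c f * f x)" by simp
      also have "\<dots> = (\<Sum>f\<in>g ` C. vscale (c f) (kap f))"
        using g by (intro kap_sum V_good) auto
      also have "\<dots> = (\<Sum>w\<in>C. vscale (c (g w)) w)"
        by (subst sum.reindex[OF injg]) (simp add: g)
      finally have sum0: "(\<Sum>w\<in>C. vscale (c (g w)) w) = 0" by simp
      have indep: "\<forall>S\<subseteq>C. finite S \<longrightarrow> (\<forall>u. (\<Sum>v\<in>S. vscale (u v) v) = 0 \<longrightarrow> (\<forall>v\<in>S. u v = 0))"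
        using C(2) unfolding VS.independent_explicit_finite_subsets .
      obtain w where w: "w \<in> C" "h = g w" using h by auto
      show "c h = 0" using indep[rule_format, OF order_refl fC sum0 w(1)] w(2) by simp
    qed
    moreover have "card (g ` C) = VS.dim W" using card_image[OF injg] C by simp
    moreover have "g ` C \<subseteq> V" using g by auto
    moreover have "finite (g ` C)" using fC by simp
    ultimately show ?thesis unfolding S_def by (intro CollectI exI[of _ "g ` C"]) simp
  qed
  have le: "y \<le> VS.dim W" if "y \<in> S" for y
  proof -
    obtain F where "y = card F" "finite F" "F \<subseteq> V" "L2_indep \<mu> F" using \<open>y \<in> S\<close> unfolding S_def by blast
    then show ?thesis using up by simp
  qed
  have "Max S = VS.dim W"
  proof (rule Max_eqI)
    show "finite S" by (rule finite_subset[of _ "{..VS.dim W}"]) (use le in auto)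
    show "\<And>y. y \<in> S \<Longrightarrow> y \<le> VS.dim W" by (rule le)
    show "VS.dim W \<in> S" by (rule lo)
  qed
  then show ?thesis unfolding L2_dim_def S_def .
qed

end


lemma unit_indep: "VS.independent (unitv ` {..<m})"
  unfolding VS.independent_explicit_finite_subsets
proof (intro allI impI ballI)
  fix T u w assume T: "T \<subseteq> unitv ` {..<m}" "finite T" "(\<Sum>v\<in>T. vscale (u v) v) = 0" "w \<in> T"
  then obtain i where i: "w = unitv i" "i < m" by auto
  have "0 = (\<Sum>v\<in>T. vscale (u v) v) i" using T by simp
  also have "\<dots> = (\<Sum>v\<in>T. u v * v i)" by (simp add: sum_fun_apply vscale_def)
  also have "\<dots> = (\<Sum>v\<in>{w}. u v * v i)"
  proof (rule sum.mono_neutral_right)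
    show "\<forall>v\<in>T - {w}. u v * v i = 0"
    proof
      fix v assume "v \<in> T - {w}"
      then obtain j where "v = unitv j" "j \<noteq> i" using T i by auto
      then show "u v * v i = 0" by (simp add: unitv_def)
    qed
  qed (use T in auto)
  also have "\<dots> = u w" using i by (simp add: unitv_def)
  finally show "u w = 0" by simp
qed

lemma unitv_inj: "inj unitv"
  by (rule injI) (metis unitv_def zero_neq_one)

lemma alg_inj_surj:
  fixes M :: "nat \<Rightarrow> nat \<Rightarrow> real"
  assumes inj: "\<And>c. (\<forall>i<k. (\<Sum>j<k. M i j * c j) = 0) \<Longrightarrow> \<forall>i<k. c i = 0"
  shows "\<exists>w. \<forall>i<k. y i = (\<Sum>j<k. M i j * w j)"
proof -
  define A where "A i t = (if t < k then M i t else y i)" for i t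
  obtain l where l: "\<exists>t<Suc k. l t \<noteq> 0" "\<forall>i<k. (\<Sum>t<Suc k. A i t * l t) = 0"
    using homog[of k "Suc k" A] by auto
  have eq: "(\<Sum>j<k. M i j * l j) + y i * l k = 0" if "i < k" for i
    using l(2) that by (simp add: A_def)
  have "l k \<noteq> 0"
  proof
    assume "l k = 0"
    then have "\<forall>i<k. l i = 0" using eq inj by simp
    then show False using l(1) \<open>l k = 0\<close> using less_Suc_eq by auto
  qed
  then have "y i = (\<Sum>j<k. M i j * (- l j / l k))" if "i < k" for i
    using eq[OF that] by (simp add: sum_divide_distrib[symmetric] sum_negf field_simps)
  then show ?thesis by (intro exI[of _ "\<lambda>j. - l j / l k"]) simp
qed

lemma alg_surj_inj:
  fixes M :: "nat \<Rightarrow> nat \<Rightarrow> real"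
  assumes surj: "\<And>y. \<exists>w. \<forall>i<k. y i = (\<Sum>j<k. M i j * w j)"
  and c: "\<forall>i<k. (\<Sum>j<k. M i j * c j) = 0"
  shows "\<forall>i<k. c i = 0"
proof -
  define d where "d t = (SOME w. \<forall>i<k. unitv t i = (\<Sum>j<k. M i j * w j))" for t
  have d: "unitv t i = (\<Sum>j<k. M i j * d t j)" if "i < k" for t i
    using someI_ex[OF surj[of "unitv t"]] that unfolding d_def by blast
  define A where "A i t = (if t < k then d t i else c i)" for i t
  obtain l where l: "\<exists>t<Suc k. l t \<noteq> 0" "\<forall>i<k. (\<Sum>t<Suc k. A i t * l t) = 0"
    using homog[of k "Suc k" A] by auto
  have eq: "(\<Sum>t<k. d t i * l t) + c i * l k = 0" if "i < k" for i
    using l(2) that by (simp add: A_def)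
  have ls: "l s = 0" if "s < k" for s
  proof -
    have "0 = (\<Sum>i<k. M s i * ((\<Sum>t<k. d t i * l t) + c i * l k))" using eq by simp
    also have "\<dots> = (\<Sum>t<k. l t * (\<Sum>i<k. M s i * d t i)) + l k * (\<Sum>i<k. M s i * c i)"
      by (simp add: algebra_simps sum.distrib sum_distrib_left sum_distrib_right)
         (subst sum.swap, simp add: mult_ac)
    also have "\<dots> = (\<Sum>t<k. l t * unitv t s)" using d that c by simp
    also have "\<dots> = l s" using that by (simp add: unitv_def if_distrib sum.delta cong: if_cong)
    finally show ?thesis by simp
  qed
  then have "l k \<noteq> 0" using l(1) using less_Suc_eq by auto
  show ?thesis
  proof (intro allI impI)
    fix i assume i: "i < k"
    have "(\<Sum>t<k. d t i * l t) = 0" by (rule sum.neutral) (simp add: ls)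
    then have "c i * l k = 0" using eq[OF i] by simp
    then show "c i = 0" using \<open>l k \<noteq> 0\<close> by simp
  qed
qed



lemma mat_range_subspace: "VS.subspace (mat_range M k)"
proof (rule VS.subspaceI)
  show "0 \<in> mat_range M k"
    unfolding mat_range_def by (rule CollectI, rule exI[of _ "\<lambda>j. 0"]) (simp add: fun_eq_iff)
next
  fix x y assume "x \<in> mat_range M k" "y \<in> mat_range M k"
  then obtain v w where v: "x = (\<lambda>i. if i < k then \<Sum>j<k. M i j * v j else 0)" "\<forall>j\<ge>k. v j = 0"
    and w: "y = (\<lambda>i. if i < k then \<Sum>j<k. M i j * w j else 0)" "\<forall>j\<ge>k. w j = 0"
    unfolding mat_range_def by blast
  have "x + y = (\<lambda>i. if i < k then \<Sum>j<k. M i j * (v j + w j) else 0)"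
    by (simp add: v w fun_eq_iff sum.distrib algebra_simps)
  moreover have "\<forall>j\<ge>k. v j + w j = 0" using v w by simp
  ultimately show "x + y \<in> mat_range M k" unfolding mat_range_def
    by (intro CollectI exI[of _ "\<lambda>j. v j + w j"]) simp
next
  fix c x assume "x \<in> mat_range M k"
  then obtain v where v: "x = (\<lambda>i. if i < k then \<Sum>j<k. M i j * v j else 0)" "\<forall>j\<ge>k. v j = 0"
    unfolding mat_range_def by blast
  have "vscale c x = (\<lambda>i. if i < k then \<Sum>j<k. M i j * (c * v j) else 0)"
    by (simp add: v vscale_def fun_eq_iff sum_distrib_left algebra_simps)
  moreover have "\<forall>j\<ge>k. c * v j = 0" using v by simp
  ultimately show "vscale c x \<in> mat_range M k" unfolding mat_range_def
    by (intro CollectI exI[of _ "\<lambda>j. c * v j"]) simp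
qed

lemma pd_range_alg:
  assumes pd: "pos_def M k" and y: "\<forall>i\<ge>k. y i = 0"
  shows "y \<in> mat_range M k"
proof -
  have inj: "\<forall>i<k. c i = 0" if c: "\<forall>i<k. (\<Sum>j<k. M i j * c j) = 0" for c
  proof (rule ccontr)
    assume "\<not> (\<forall>i<k. c i = 0)"
    then have "(\<Sum>i<k. \<Sum>j<k. c i * M i j * c j) > 0" using pd unfolding pos_def_def by blast
    moreover have "(\<Sum>i<k. \<Sum>j<k. c i * M i j * c j) = (\<Sum>i<k. c i * (\<Sum>j<k. M i j * c j))"
      by (simp add: sum_distrib_left mult_ac)
    ultimately show False using c by simp
  qed
  obtain w where w: "\<forall>i<k. y i = (\<Sum>j<k. M i j * w j)"
    using alg_inj_surj[of k M y] inj by blast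
  define w' where "w' j = (if j < k then w j else 0)" for j
  have "y = (\<lambda>i. if i < k then \<Sum>j<k. M i j * w' j else 0)"
    using w y by (auto simp: fun_eq_iff w'_def intro!: sum.cong)
  moreover have "\<forall>j\<ge>k. w' j = 0" by (simp add: w'_def)
  ultimately show ?thesis unfolding mat_range_def
    by (intro CollectI exI[of _ w']) simp
qed

lemma unitv_Vk: "i < k \<Longrightarrow> \<forall>j\<ge>k. unitv i j = 0"
  by (simp add: unitv_def)

context setting begin

lemma range_pd:
  assumes J: "J \<in> {L, R, Q}"
  and rng: "\<forall>y. (\<forall>i\<ge>k. y i = 0) \<longrightarrow> y \<in> mat_range (moment_mat \<mu> J k) k"
  shows "pos_def (moment_mat \<mu> J k) k"
  unfolding pos_def_def
proof (intro conjI allI impI)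
  fix i j show "moment_mat \<mu> J k i j = moment_mat \<mu> J k j i"
    by (simp add: moment_mat_def add.commute)
next
  fix c :: "nat \<Rightarrow> real" assume "\<exists>i<k. c i \<noteq> 0"
  define M where "M = moment_mat \<mu> J k"
  have surj: "\<exists>w. \<forall>i<k. y i = (\<Sum>j<k. M i j * w j)" for y
  proof -
    have "(\<lambda>i. if i < k then y i else 0) \<in> mat_range M k" using rng unfolding M_def by simp
    then obtain v where "(\<lambda>i. if i < k then y i else 0) = (\<lambda>i. if i < k then \<Sum>j<k. M i j * v j else 0)"
      unfolding mat_range_def by blast
    then have "\<forall>i<k. y i = (\<Sum>j<k. M i j * v j)" by (metis (no_types, lifting))
    then show ?thesis by blast
  qed
  have ig: "integrable \<mu> (\<lambda>x. indicator J x * (pv c x * x ^ i))" for i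
    using J by (intro good_integrable good_pvJ)
  have q: "(\<Sum>i<k. \<Sum>j<k. c i * M i j * c j) = (LINT x|\<mu>. indicator J x * (pv c x * pv c x))"
  proof -
    have "(\<Sum>i<k. \<Sum>j<k. c i * M i j * c j) = (\<Sum>i<k. c i * (\<Sum>j<k. M i j * c j))"
      by (simp add: sum_distrib_left mult_ac)
    also have "\<dots> = (\<Sum>i<k. c i * (LINT x|\<mu>. indicator J x * (pv c x * x ^ i)))"
      using mom[OF J] by (simp add: M_def)
    also have "\<dots> = (\<Sum>i<k. (LINT x|\<mu>. c i * (indicator J x * (pv c x * x ^ i))))"
      by simp
    also have "\<dots> = (LINT x|\<mu>. (\<Sum>i<k. c i * (indicator J x * (pv c x * x ^ i))))"
      by (rule Bochner_Integration.integral_sum[symmetric]) (use ig in simp)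
    also have "\<dots> = (LINT x|\<mu>. indicator J x * (pv c x * pv c x))"
      by (simp add: pv_sq[of c] sum_distrib_left mult_ac)
    finally show ?thesis .
  qed
  have nn: "0 \<le> (LINT x|\<mu>. indicator J x * (pv c x * pv c x))"
    by (rule Bochner_Integration.integral_nonneg) simp
  show "(\<Sum>i<k. \<Sum>j<k. c i * moment_mat \<mu> J k i j * c j) > 0"
  proof (rule ccontr)
    assume "\<not> ?thesis"
    then have z: "(LINT x|\<mu>. indicator J x * (pv c x * pv c x)) = 0" using q nn unfolding M_def by linarith
    have igs: "integrable \<mu> (\<lambda>x. indicator J x * (pv c x * pv c x))"
    proof -
      have JJ: "J \<in> sets borel" "J \<subseteq> {a..b}" using J LRQ_sets LRQ_sub by auto
      have "good (\<lambda>x. indicator J x * pv c x * pv c x)"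
        by (rule good_mult_cont[OF good_ind_pv[OF JJ] pv_cont])
      then have "integrable \<mu> (\<lambda>x. indicator J x * pv c x * pv c x)" by (rule good_integrable)
      then show ?thesis by (simp add: mult.assoc)
    qed
    have "AE x in \<mu>. indicator J x * (pv c x * pv c x) = 0"
      using integral_nonneg_eq_0_iff_AE[OF igs] z by simp
    then have ae: "AE x in \<mu>. indicator J x * (pv c x * x ^ i) = 0" for i
      by eventually_elim (auto simp: indicator_def)
    have "\<forall>i<k. (\<Sum>j<k. M i j * c j) = 0"
    proof (intro allI impI)
      fix i assume "i < k"
      have "(\<Sum>j<k. M i j * c j) = (LINT x|\<mu>. indicator J x * (pv c x * x ^ i))"
        using mom[OF J] by (simp add: M_def)
      also have "\<dots> = 0" by (rule integral_eq_zero_AE[OF ae])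
      finally show "(\<Sum>j<k. M i j * c j) = 0" .
    qed
    then have "\<forall>i<k. c i = 0" using alg_surj_inj[of k M c] surj by blast
    then show False using \<open>\<exists>i<k. c i \<noteq> 0\<close> by blast
  qed
qed

lemma Vk_W: 
  assumes "pos_def (moment_mat \<mu> L k) k" "pos_def (moment_mat \<mu> R k) k" "\<forall>i\<ge>k. y i = 0"
  shows "y \<in> W"
  unfolding W_def using pd_range_alg[OF assms(1,3)] pd_range_alg[OF assms(2,3)] by (rule IntI)

lemma dim_k_of_pd:
  assumes "pos_def (moment_mat \<mu> L k) k" "pos_def (moment_mat \<mu> R k) k"
  shows "VS.dim W = k"
proof (rule VS.dim_unique)
  show "unitv ` {..<k} \<subseteq> W" using Vk_W[OF assms] unitv_Vk by blast
  show "W \<subseteq> VS.span (unitv ` {..<k})" by (rule W_span)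
  show "VS.independent (unitv ` {..<k})" by (rule unit_indep)
  show "card (unitv ` {..<k}) = k"
    using card_image[OF inj_on_subset[OF unitv_inj subset_UNIV]] by simp
qed

lemma range_of_dim:
  assumes d: "VS.dim W = k" and J: "J \<in> {L, R}" and y: "\<forall>i\<ge>k. y i = 0"
  shows "y \<in> mat_range (moment_mat \<mu> J k) k"
proof -
  obtain C where C: "C \<subseteq> W" "VS.independent C" "W \<subseteq> VS.span C" "card C = VS.dim W"
    using VS.basis_exists by blast
  have fC: "finite C" using indep_le C by blast
  define E where "E = unitv ` {..<k}"
  have fE: "finite E" "card E \<le> k" unfolding E_def by (auto intro: card_image_le[THEN order_trans])
  have ES: "E \<subseteq> VS.span C"
  proof
    fix e assume e: "e \<in> E"
    show "e \<in> VS.span C"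
    proof (rule ccontr)
      assume ns: "e \<notin> VS.span C"
      have ind: "VS.independent (insert e C)" using VS.independent_insertI[OF ns C(2)] .
      have "insert e C \<subseteq> VS.span E"
      proof -
        have "C \<subseteq> VS.span E" using C(1) W_span unfolding E_def by (rule order_trans)
        moreover have "e \<in> VS.span E" by (rule VS.span_base[OF e])
        ultimately show ?thesis by simp
      qed
      from VS.independent_span_bound[OF fE(1) ind this] have "card (insert e C) \<le> card E" by (rule conjunct2)
      moreover have "e \<notin> C"
      proof
        assume "e \<in> C" then have "e \<in> VS.span C" by (rule VS.span_base)
        with ns show False by simp
      qed
      ultimately show False using fC fE C(4) d by simp
    qed
  qed
  have "y \<in> VS.span E" unfolding E_def by (rule unit_span[OF y])
  also have "VS.span E \<subseteq> VS.span C" using ES by (rule VS.span_minimal) simp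
  also have "VS.span C \<subseteq> mat_range (moment_mat \<mu> J k) k"
    using C(1) J unfolding W_def by (intro VS.span_minimal mat_range_subspace) auto
  finally show ?thesis .
qed

end


context setting begin

lemma int_lin:
  fixes f :: "'i \<Rightarrow> real \<Rightarrow> real" and h :: "real \<Rightarrow> real" and c :: "'i \<Rightarrow> real"
  assumes "\<And>j. j \<in> I \<Longrightarrow> integrable \<mu> (\<lambda>x. f j x * h x)"
  shows "(LINT x|\<mu>. (\<Sum>j\<in>I. c j * f j x) * h x) = (\<Sum>j\<in>I. c j * (LINT x|\<mu>. f j x * h x))"
proof -
  have pw: "(\<Sum>j\<in>I. c j * f j x) * h x = (\<Sum>j\<in>I. c j * (f j x * h x))" for x
    by (simp add: sum_distrib_right mult.assoc)
  have "(LINT x|\<mu>. (\<Sum>j\<in>I. c j * f j x) * h x) = (LINT x|\<mu>. (\<Sum>j\<in>I. c j * (f j x * h x)))"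
    by (simp only: pw)
  also have "\<dots> = (\<Sum>j\<in>I. (LINT x|\<mu>. c j * (f j x * h x)))"
    by (rule Bochner_Integration.integral_sum) (use assms in simp)
  also have "\<dots> = (\<Sum>j\<in>I. c j * (LINT x|\<mu>. f j x * h x))" by simp
  finally show ?thesis .
qed

lemma V_int_pow: "f \<in> V \<Longrightarrow> integrable \<mu> (\<lambda>x. f x * x ^ i)"
  by (intro good_integrable good_pow V_good)

lemma V_int_mult: "f \<in> V \<Longrightarrow> g \<in> V \<Longrightarrow> integrable \<mu> (\<lambda>x. f x * g x)"
  by (intro good_integrable good_mult V_good)

lemma V_sq_pos:
  assumes "f \<in> V" "\<not> (AE x in \<mu>. f x = 0)"
  shows "(LINT x|\<mu>. f x * f x) > 0"
proof -
  have nn: "0 \<le> (LINT x|\<mu>. f x * f x)" by (rule Bochner_Integration.integral_nonneg) simp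
  have "(LINT x|\<mu>. f x * f x) \<noteq> 0"
  proof
    assume "(LINT x|\<mu>. f x * f x) = 0"
    then have "AE x in \<mu>. f x * f x = 0"
      using integral_nonneg_eq_0_iff_AE[OF V_int_mult[OF assms(1) assms(1)]] by simp
    then have "AE x in \<mu>. f x = 0" by eventually_elim simp
    with assms(2) show False by simp
  qed
  with nn show ?thesis by linarith
qed

lemma kap_zero_AE: "f \<in> V \<Longrightarrow> AE x in \<mu>. f x = 0 \<Longrightarrow> kap f = (\<lambda>i. 0)"
proof -
  assume f: "f \<in> V" and ae: "AE x in \<mu>. f x = 0"
  have "kap f = kap (\<lambda>x. 0)" by (rule kap_AE[OF V_good[OF f] good_zero ae])
  also have "\<dots> = (\<lambda>i. 0)" by (simp add: kap_def fun_eq_iff)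
  finally show ?thesis .
qed

definition orthon :: "nat \<Rightarrow> (nat \<Rightarrow> real \<Rightarrow> real) \<Rightarrow> bool" where
  "orthon l0 e \<longleftrightarrow> (\<forall>l. l0 < l \<and> l \<le> k \<longrightarrow> e l \<in> V \<and> (\<forall>i. k \<le> i \<and> i \<le> k + l - 2 \<longrightarrow> (LINT x|\<mu>. e l x * x ^ i) = 0)) \<and>
     (\<forall>l l'. l0 < l \<and> l \<le> k \<and> l0 < l' \<and> l' \<le> k \<longrightarrow> (LINT x|\<mu>. e l x * e l' x) = (if l = l' then 1 else 0))"

lemma constr:
  assumes pdL: "pos_def (moment_mat \<mu> L k) k" and pdR: "pos_def (moment_mat \<mu> R k) k"
  shows "m \<le> k \<Longrightarrow> \<exists>e. orthon (k - m) e"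
proof (induct m)
  case 0
  show ?case by (rule exI[of _ "\<lambda>l x. 0"]) (auto simp: orthon_def)
next
  case (Suc m)
  then obtain e where e: "orthon (k - m) e" by auto
  define l0 where "l0 = k - m"
  have l0: "1 \<le> l0" "l0 \<le> k" "k - Suc m = l0 - 1" using Suc.prems by (auto simp: l0_def)
  have eV: "e l \<in> V" if "l0 < l" "l \<le> k" for l using e that unfolding orthon_def l0_def by blast
  define gb where "gb j = (SOME f. f \<in> V \<and> kap f = unitv j)" for j
  have gb: "gb j \<in> V \<and> kap (gb j) = unitv j" if "j < k" for j
  proof -
    have "unitv j \<in> W" using Vk_W[OF pdL pdR] unitv_Vk[OF that] by blast
    then have "\<exists>f. f \<in> V \<and> kap f = unitv j" using W_kap by blast
    then show ?thesis unfolding gb_def by (rule someI_ex)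
  qed
  define A where "A r j = (if r < l0 - 1 then (LINT x|\<mu>. gb j x * x ^ (k + r)) else (LINT x|\<mu>. gb j x * e (r + 2) x))" for r j
  obtain c where c: "\<exists>j<k. c j \<noteq> 0" "\<forall>r<k - 1. (\<Sum>j<k. A r j * c j) = 0"
    using homog[of "k - 1" k A] l0 by auto
  define g where "g x = (\<Sum>j<k. c j * gb j x)" for x
  have gV: "g \<in> V" unfolding g_def by (rule V_sum) (use gb in auto)
  have kg: "kap g = (\<Sum>j<k. vscale (c j) (unitv j))"
    unfolding g_def by (subst kap_sum) (use gb V_good in auto)
  have "\<not> (AE x in \<mu>. g x = 0)"
  proof
    assume "AE x in \<mu>. g x = 0"
    then have "kap g = (\<lambda>i. 0)" by (rule kap_zero_AE[OF gV])
    moreover obtain j0 where j0: "j0 < k" "c j0 \<noteq> 0" using c(1) by blast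
    moreover have "kap g j0 = c j0"
      unfolding kg sum_fun_apply using j0 by (simp add: vscale_def unitv_def if_distrib sum.delta cong: if_cong)
    ultimately show False by simp
  qed
  then have Ig: "(LINT x|\<mu>. g x * g x) > 0" by (rule V_sq_pos[OF gV])
  define s where "s = sqrt (LINT x|\<mu>. g x * g x)"
  have s: "s > 0" "s * s = (LINT x|\<mu>. g x * g x)" using Ig by (auto simp: s_def)
  have mom_g: "(LINT x|\<mu>. g x * x ^ (k + r)) = 0" if "r < l0 - 1" for r
  proof -
    have "(LINT x|\<mu>. g x * x ^ (k + r)) = (\<Sum>j<k. c j * (LINT x|\<mu>. gb j x * x ^ (k + r)))"
      unfolding g_def by (rule int_lin) (use gb V_int_pow in auto)
    also have "\<dots> = (\<Sum>j<k. A r j * c j)" using that by (simp add: A_def mult.commute)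
    also have "\<dots> = 0" using c(2) that l0 by simp
    finally show ?thesis .
  qed
  have inn_g: "(LINT x|\<mu>. g x * e l' x) = 0" if "l0 < l'" "l' \<le> k" for l'
  proof -
    have "(LINT x|\<mu>. g x * e l' x) = (\<Sum>j<k. c j * (LINT x|\<mu>. gb j x * e l' x))"
      unfolding g_def by (rule int_lin) (use gb V_int_mult eV that in auto)
    also have "\<dots> = (\<Sum>j<k. A (l' - 2) j * c j)"
    proof -
      have cond: "\<not> (l' - 2 < l0 - 1)" "l' - 2 + 2 = l'" using that l0 by auto
      have Ar: "A (l' - 2) j = (LINT x|\<mu>. gb j x * e l' x)" for j
        unfolding A_def using cond by simp
      show ?thesis by (rule sum.cong[OF refl]) (simp only: Ar, rule mult.commute)
    qed
    also have "\<dots> = 0" using c(2) that l0 by simp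
    finally show ?thesis .
  qed
  define e' where "e' = e(l0 := (\<lambda>x. (1 / s) * g x))"
  have "orthon (k - Suc m) e'"
    unfolding orthon_def l0(3)
  proof (intro conjI allI impI)
    fix l assume l: "l0 - 1 < l \<and> l \<le> k"
    show "e' l \<in> V"
    proof (cases "l = l0")
      case True then show ?thesis unfolding e'_def using V_scale[OF gV, of "1 / s"] by simp
    next
      case False
      then have "l0 < l" using l l0(1) by auto
      then show ?thesis unfolding e'_def using eV l False by simp
    qed
    fix i assume i: "k \<le> i \<and> i \<le> k + l - 2"
    show "(LINT x|\<mu>. e' l x * x ^ i) = 0"
    proof (cases "l = l0")
      case True
      then have "i = k + (i - k)" "i - k < l0 - 1" using i l0 by auto
      then have "(LINT x|\<mu>. g x * x ^ i) = 0" using mom_g by metis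
      then show ?thesis using True unfolding e'_def by (simp add: mult.assoc)
    next
      case False
      then have "l0 < l" using l l0(1) by auto
      then show ?thesis using e i l False unfolding e'_def orthon_def l0_def by auto
    qed
  next
    fix l l' assume ll: "l0 - 1 < l \<and> l \<le> k \<and> l0 - 1 < l' \<and> l' \<le> k"
    show "(LINT x|\<mu>. e' l x * e' l' x) = (if l = l' then 1 else 0)"
    proof (cases "l = l0"; cases "l' = l0")
      assume "l = l0" "l' = l0"
      then show ?thesis unfolding e'_def using s Ig by (simp add: field_simps)
    next
      assume a1: "l = l0" "l' \<noteq> l0"
      moreover have "l0 < l'" using ll l0(1) a1 by auto
      ultimately have "(LINT x|\<mu>. g x * e l' x) = 0" using inn_g ll by simp
      then show ?thesis using a1 unfolding e'_def by (simp add: mult.assoc)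
    next
      assume a1: "l \<noteq> l0" "l' = l0"
      moreover have "l0 < l" using ll l0(1) a1 by auto
      ultimately have "(LINT x|\<mu>. g x * e l x) = 0" using inn_g ll by simp
      then have "(LINT x|\<mu>. e l x * g x) = 0" by (simp add: mult.commute)
      then show ?thesis using a1 unfolding e'_def by (simp add: mult.assoc mult.left_commute)
    next
      assume a1: "l \<noteq> l0" "l' \<noteq> l0"
      then have "l0 < l" "l0 < l'" using ll l0(1) by auto
      then show ?thesis using e ll a1 unfolding e'_def orthon_def l0_def by auto
    qed
  qed
  then show ?case by blast
qed

end


context setting begin

lemma part2:
  assumes pdL: "pos_def (moment_mat \<mu> L k) k" and pdR: "pos_def (moment_mat \<mu> R k) k"
  shows "\<exists>e :: nat \<Rightarrow> real \<Rightarrow> real.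
      (\<forall>l\<in>{1..k}. e l \<in> V) \<and>
      (\<forall>l\<in>{1..k}. \<forall>m\<in>{1..k}. (LINT x|\<mu>. e l x * e m x) = (if l = m then 1 else 0)) \<and>
      (\<forall>f\<in>V. \<exists>c :: nat \<Rightarrow> real. AE x in \<mu>. f x = (\<Sum>l=1..k. c l * e l x)) \<and>
      (\<forall>l\<in>{1..k}. \<forall>i<k. (LINT x|\<mu>. e l x * x ^ i) = 0) \<and>
      (\<forall>l\<in>{2..k}. \<forall>i\<in>{k..k+l-2}. (LINT x|\<mu>. e l x * x ^ i) = 0)"
proof -
  obtain e where e: "orthon 0 e" using constr[OF pdL pdR, of k] by auto
  have eV: "e l \<in> V" if "l \<in> {1..k}" for l using e that unfolding orthon_def by auto
  have on: "(LINT x|\<mu>. e l x * e m x) = (if l = m then 1 else 0)" if "l \<in> {1..k}" "m \<in> {1..k}" for l m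
    using e that unfolding orthon_def by auto
  have ex: "(LINT x|\<mu>. e l x * x ^ i) = 0" if "l \<in> {2..k}" "i \<in> {k..k+l-2}" for l i
    using e that unfolding orthon_def by auto
  have mo: "(LINT x|\<mu>. e l x * x ^ i) = 0" if "l \<in> {1..k}" "i < k" for l i
  proof -
    have "(LINT x|\<mu>. indicator Q x * (e l x * x ^ i)) = 0" using eV[OF that(1)] that(2) V_char by blast
    moreover have "indicator Q x * (e l x * x ^ i) = e l x * x ^ i" for x
      using V_zero[OF eV[OF that(1)], of x] by (cases "x \<in> Q") auto
    ultimately show ?thesis by simp
  qed
  have sp: "\<exists>c :: nat \<Rightarrow> real. AE x in \<mu>. f x = (\<Sum>l=1..k. c l * e l x)" if f: "f \<in> V" for f
  proof -
    define cf where "cf l = (LINT x|\<mu>. f x * e l x)" for l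
    define h where "h x = f x - (\<Sum>l=1..k. cf l * e l x)" for x
    have "(\<lambda>x. f x + (-1) * (\<Sum>l=1..k. cf l * e l x)) \<in> V"
      by (intro V_lin f V_sum) (use eV in auto)
    then have hV: "h \<in> V" unfolding h_def by simp
    have hort: "(LINT x|\<mu>. h x * e m x) = 0" if m: "m \<in> {1..k}" for m
    proof -
      have i1: "integrable \<mu> (\<lambda>x. f x * e m x)" by (rule V_int_mult[OF f eV[OF m]])
      have i2: "integrable \<mu> (\<lambda>x. (\<Sum>l=1..k. cf l * e l x) * e m x)"
        by (intro V_int_mult V_sum eV m) auto
      have "(LINT x|\<mu>. h x * e m x) = (LINT x|\<mu>. f x * e m x - (\<Sum>l=1..k. cf l * e l x) * e m x)"
        unfolding h_def by (simp add: left_diff_distrib)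
      also have "\<dots> = (LINT x|\<mu>. f x * e m x) - (LINT x|\<mu>. (\<Sum>l=1..k. cf l * e l x) * e m x)"
        by (rule Bochner_Integration.integral_diff[OF i1 i2])
      also have "(LINT x|\<mu>. (\<Sum>l=1..k. cf l * e l x) * e m x) = (\<Sum>l=1..k. cf l * (LINT x|\<mu>. e l x * e m x))"
        by (rule int_lin) (use V_int_mult eV m in auto)
      also have "\<dots> = (\<Sum>l=1..k. if l = m then cf l else 0)"
      proof (rule sum.cong[OF refl])
        fix l assume "l \<in> {1..k}"
        then show "cf l * (LINT x|\<mu>. e l x * e m x) = (if l = m then cf l else 0)"
          using on[OF _ m, of l] by simp
      qed
      also have "\<dots> = cf m" using m by (simp add: sum.delta)
      finally show ?thesis by (simp add: cf_def)
    qed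
    define bb where "bb t = (if t < k then e (Suc t) else h)" for t
    have bV: "bb t \<in> V" if "t < Suc k" for t using that eV hV by (auto simp: bb_def)
    obtain lam where lam: "\<exists>t<Suc k. lam t \<noteq> 0" "\<forall>i<k. (\<Sum>t<Suc k. kap (bb t) i * lam t) = 0"
      using homog[of k "Suc k" "\<lambda>i t. kap (bb t) i"] by auto
    define y where "y x = (\<Sum>t<Suc k. lam t * bb t x)" for x
    have yV: "y \<in> V" unfolding y_def by (rule V_sum) (use bV in auto)
    have ky: "kap y = (\<Sum>t<Suc k. vscale (lam t) (kap (bb t)))"
      unfolding y_def by (rule kap_sum) (use bV V_good in auto)
    have "\<forall>i<k. (LINT x|\<mu>. indicator L x * (y x * x ^ i)) = 0"
    proof (intro allI impI)
      fix i assume i: "i < k"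
      have "(LINT x|\<mu>. indicator L x * (y x * x ^ i)) = kap y i" using i by (simp add: kap_def)
      also have "\<dots> = (\<Sum>t<Suc k. kap (bb t) i * lam t)"
        unfolding ky sum_fun_apply by (simp add: vscale_def mult.commute)
      also have "\<dots> = 0" using lam(2) i by blast
      finally show "(LINT x|\<mu>. indicator L x * (y x * x ^ i)) = 0" .
    qed
    with yV have aey: "AE x in \<mu>. y x = 0" by (rule KL)
    have lz: "lam m = 0" if m: "m < k" for m
    proof -
      have "AE x in \<mu>. y x * e (Suc m) x = 0" using aey by eventually_elim simp
      then have "0 = (LINT x|\<mu>. y x * e (Suc m) x)" by (simp add: integral_eq_zero_AE)
      also have "\<dots> = (\<Sum>t<Suc k. lam t * (LINT x|\<mu>. bb t x * e (Suc m) x))"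
        unfolding y_def by (rule int_lin) (use V_int_mult bV eV m in auto)
      also have "\<dots> = (\<Sum>t<Suc k. if t = m then lam t else 0)"
      proof (rule sum.cong[OF refl])
        fix t assume t: "t \<in> {..<Suc k}"
        show "lam t * (LINT x|\<mu>. bb t x * e (Suc m) x) = (if t = m then lam t else 0)"
        proof (cases "t < k")
          case True
          then show ?thesis using on[of "Suc t" "Suc m"] m by (simp add: bb_def)
        next
          case False
          then have "t \<noteq> m" using m by auto
          moreover have "bb t = h" using False by (simp add: bb_def)
          ultimately show ?thesis using hort[of "Suc m"] m by simp
        qed
      qed
      also have "\<dots> = lam m" using m by (simp add: sum.delta)
      finally show ?thesis by simp
    qed
    then have lk: "lam k \<noteq> 0" using lam(1) less_Suc_eq by auto
    have "y x = lam k * h x" for x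
    proof -
      have "y x = (\<Sum>t<k. lam t * bb t x) + lam k * bb k x" by (simp add: y_def)
      also have "(\<Sum>t<k. lam t * bb t x) = 0" by (rule sum.neutral) (simp add: lz)
      finally show ?thesis by (simp add: bb_def)
    qed
    then have "AE x in \<mu>. lam k * h x = 0" using aey by simp
    then have "AE x in \<mu>. h x = 0" by eventually_elim (use lk in simp)
    then have "AE x in \<mu>. f x = (\<Sum>l=1..k. cf l * e l x)" by eventually_elim (simp add: h_def)
    then show ?thesis by blast
  qed
  show ?thesis
    by (rule exI[of _ e]) (use eV on sp mo ex in blast)
qed

end


context setting begin

lemma summary1: "L2_dim \<mu> (L2_Qk \<mu> Q k) =
   vector_space.dim vscale (mat_range (moment_mat \<mu> (Q_left Q) k) k \<inter> mat_range (moment_mat \<mu> (Q_right Q) k) k)"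
  using dim_formula unfolding V_def W_def QL QR .

lemma summary2: "pos_def (moment_mat \<mu> (Q_left Q) k) k \<Longrightarrow> pos_def (moment_mat \<mu> (Q_right Q) k) k \<Longrightarrow>
   L2_dim \<mu> (L2_Qk \<mu> Q k) = k"
  using dim_formula dim_k_of_pd unfolding V_def QL QR by simp

lemma summary3: "L2_dim \<mu> (L2_Qk \<mu> Q k) = k \<Longrightarrow>
   pos_def (moment_mat \<mu> (Q_left Q) k) k \<and> pos_def (moment_mat \<mu> (Q_right Q) k) k"
proof -
  assume "L2_dim \<mu> (L2_Qk \<mu> Q k) = k"
  then have d: "VS.dim W = k" using dim_formula unfolding V_def by simp
  have "pos_def (moment_mat \<mu> L k) k"
    by (rule range_pd) (use range_of_dim[OF d] in auto)
  moreover have "pos_def (moment_mat \<mu> R k) k"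
    by (rule range_pd) (use range_of_dim[OF d] in auto)
  ultimately show ?thesis unfolding QL QR by simp
qed

lemma summary4: "pos_def (moment_mat \<mu> (Q_left Q) k) k \<Longrightarrow> pos_def (moment_mat \<mu> (Q_right Q) k) k \<Longrightarrow>
  (\<exists>a :: nat \<Rightarrow> real \<Rightarrow> real.
              (\<forall>l\<in>{1..k}. a l \<in> L2_Qk \<mu> Q k) \<and>
              (\<forall>l\<in>{1..k}. \<forall>m\<in>{1..k}.
                  (LINT x|\<mu>. a l x * a m x) = (if l = m then 1 else 0)) \<and>
              (\<forall>f\<in>L2_Qk \<mu> Q k. \<exists>c :: nat \<Rightarrow> real.
                  AE x in \<mu>. f x = (\<Sum>l=1..k. c l * a l x)) \<and>
              (\<forall>l\<in>{1..k}. \<forall>i<k. (LINT x|\<mu>. a l x * x ^ i) = 0) \<and>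
              (\<forall>l\<in>{2..k}. \<forall>i\<in>{k..k+l-2}. (LINT x|\<mu>. a l x * x ^ i) = 0))"
  using part2 unfolding V_def QL QR by blast

end

lemma grid_form:
  assumes "dyadic_grid D" "Q \<in> D"
  shows "\<exists>a b. a < b \<and> Q = {a..<b}"
proof -
  obtain a0 and j :: int where "Q = {a0..<a0 + 2 powr j}" using assms unfolding dyadic_grid_def by blast
  moreover have "a0 < a0 + 2 powr j" by simp
  ultimately show ?thesis by blast
qed

lemma grid_parent:
  assumes G: "dyadic_grid D" and QD: "Q \<in> D"
  shows "\<exists>P\<in>D. Q = Q_left P \<or> Q = Q_right P"
proof -
  obtain a0 and j :: int where Q: "Q = {a0..<a0 + 2 powr j}" using assms unfolding dyadic_grid_def by blast
  define h where "h = (2::real) powr j"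
  have h: "h > 0" by (simp add: h_def)
  have uniq: "\<exists>!Q. Q \<in> D \<and> x \<in> Q \<and> Sup Q - Inf Q = 2 powr j'" for x and j' :: int
    using G unfolding dyadic_grid_def by blast
  obtain P where P: "P \<in> D" "a0 \<in> P" "Sup P - Inf P = 2 powr (j + 1)"
    using uniq[of a0 "j + 1"] by blast
  obtain c and j' :: int where Pc: "P = {c..<c + 2 powr j'}" using G P(1) unfolding dyadic_grid_def by blast
  have "2 powr j' = (2::real) powr (j + 1)" using P(3) by (simp add: Pc)
  also have "\<dots> = 2 * h" by (simp add: h_def powr_add)
  finally have Pc2: "P = {c..<c + 2 * h}" using Pc by simp
  have PL: "Q_left P = {c..<c + h}" and PR: "Q_right P = {c + h..<c + 2 * h}"
  proof -
    have mid: "(2 * c + 2 * h) / 2 = c + h" by simp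
    show "Q_left P = {c..<c + h}" using h by (simp add: Q_left_def Pc2 mid)
    show "Q_right P = {c + h..<c + 2 * h}" using h by (simp add: Q_right_def Pc2 mid)
  qed
  have inD: "Q_left P \<in> D" "Q_right P \<in> D" using G P(1) unfolding dyadic_grid_def by blast+
  have QQ: "Q \<in> D \<and> a0 \<in> Q \<and> Sup Q - Inf Q = 2 powr j" using QD h by (simp add: Q h_def)
  have "Q_left P \<in> D \<and> a0 \<in> Q_left P \<and> Sup (Q_left P) - Inf (Q_left P) = 2 powr j \<or>
        Q_right P \<in> D \<and> a0 \<in> Q_right P \<and> Sup (Q_right P) - Inf (Q_right P) = 2 powr j"
  proof -
    have "a0 \<in> {c..<c + 2 * h}" using P(2) Pc2 by simp
    then have "a0 \<in> {c..<c + h} \<or> a0 \<in> {c + h..<c + 2 * h}" by auto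
    moreover have "Sup {c..<c + h} - Inf {c..<c + h} = h" using h by simp
    moreover have "Sup {c + h..<c + 2 * h} - Inf {c + h..<c + 2 * h} = h" using h by simp
    ultimately show ?thesis using inD unfolding PL PR h_def[symmetric] by blast
  qed
  then show ?thesis using uniq[of a0 j] QQ P(1) by metis
qed

lemma per_Q:
  assumes lf: "locally_finite_borel \<mu>" and G: "dyadic_grid D" and QD: "Q \<in> D"
  shows "L2_dim \<mu> (L2_Qk \<mu> Q k) =
            vector_space.dim vscale
              (mat_range (moment_mat \<mu> (Q_left Q) k) k \<inter> mat_range (moment_mat \<mu> (Q_right Q) k) k)"
    and "pos_def (moment_mat \<mu> (Q_left Q) k) k \<Longrightarrow> pos_def (moment_mat \<mu> (Q_right Q) k) k \<Longrightarrow>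
          L2_dim \<mu> (L2_Qk \<mu> Q k) = k"
    and "L2_dim \<mu> (L2_Qk \<mu> Q k) = k \<Longrightarrow>
          pos_def (moment_mat \<mu> (Q_left Q) k) k \<and> pos_def (moment_mat \<mu> (Q_right Q) k) k"
    and "pos_def (moment_mat \<mu> (Q_left Q) k) k \<Longrightarrow> pos_def (moment_mat \<mu> (Q_right Q) k) k \<Longrightarrow>
  (\<exists>a :: nat \<Rightarrow> real \<Rightarrow> real.
              (\<forall>l\<in>{1..k}. a l \<in> L2_Qk \<mu> Q k) \<and>
              (\<forall>l\<in>{1..k}. \<forall>m\<in>{1..k}.
                  (LINT x|\<mu>. a l x * a m x) = (if l = m then 1 else 0)) \<and>
              (\<forall>f\<in>L2_Qk \<mu> Q k. \<exists>c :: nat \<Rightarrow> real.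
                  AE x in \<mu>. f x = (\<Sum>l=1..k. c l * a l x)) \<and>
              (\<forall>l\<in>{1..k}. \<forall>i<k. (LINT x|\<mu>. a l x * x ^ i) = 0) \<and>
              (\<forall>l\<in>{2..k}. \<forall>i\<in>{k..k+l-2}. (LINT x|\<mu>. a l x * x ^ i) = 0))"
proof -
  obtain a b where ab: "a < b" "Q = {a..<b}" using grid_form[OF G QD] by blast
  interpret S: setting \<mu> k a b using lf ab(1) by unfold_locales
  have QS: "Q = S.Q" using ab(2) by (simp add: S.Q_def)
  show "L2_dim \<mu> (L2_Qk \<mu> Q k) =
            vector_space.dim vscale
              (mat_range (moment_mat \<mu> (Q_left Q) k) k \<inter> mat_range (moment_mat \<mu> (Q_right Q) k) k)"
    unfolding QS by (rule S.summary1)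
  show "pos_def (moment_mat \<mu> (Q_left Q) k) k \<Longrightarrow> pos_def (moment_mat \<mu> (Q_right Q) k) k \<Longrightarrow>
          L2_dim \<mu> (L2_Qk \<mu> Q k) = k"
    unfolding QS by (rule S.summary2)
  show "L2_dim \<mu> (L2_Qk \<mu> Q k) = k \<Longrightarrow>
          pos_def (moment_mat \<mu> (Q_left Q) k) k \<and> pos_def (moment_mat \<mu> (Q_right Q) k) k"
    unfolding QS by (rule S.summary3)
  show "pos_def (moment_mat \<mu> (Q_left Q) k) k \<Longrightarrow> pos_def (moment_mat \<mu> (Q_right Q) k) k \<Longrightarrow>
  (\<exists>a :: nat \<Rightarrow> real \<Rightarrow> real.
              (\<forall>l\<in>{1..k}. a l \<in> L2_Qk \<mu> Q k) \<and>
              (\<forall>l\<in>{1..k}. \<forall>m\<in>{1..k}.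
                  (LINT x|\<mu>. a l x * a m x) = (if l = m then 1 else 0)) \<and>
              (\<forall>f\<in>L2_Qk \<mu> Q k. \<exists>c :: nat \<Rightarrow> real.
                  AE x in \<mu>. f x = (\<Sum>l=1..k. c l * a l x)) \<and>
              (\<forall>l\<in>{1..k}. \<forall>i<k. (LINT x|\<mu>. a l x * x ^ i) = 0) \<and>
              (\<forall>l\<in>{2..k}. \<forall>i\<in>{k..k+l-2}. (LINT x|\<mu>. a l x * x ^ i) = 0))"
    unfolding QS by (rule S.summary4)
qed

theorem theorem2:
  fixes \<mu> :: "real measure" and k :: nat and D :: "real set set"
  assumes "locally_finite_borel \<mu>"
    and "dyadic_grid D"
  shows "(\<forall>Q\<in>D. L2_dim \<mu> (L2_Qk \<mu> Q k) =
            vector_space.dim vscale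
              (mat_range (moment_mat \<mu> (Q_left Q) k) k \<inter> mat_range (moment_mat \<mu> (Q_right Q) k) k))
       \<and> ((\<forall>Q\<in>D. L2_dim \<mu> (L2_Qk \<mu> Q k) = k) \<longleftrightarrow> (\<forall>Q\<in>D. pos_def (moment_mat \<mu> Q k) k))
       \<and> ((\<forall>Q\<in>D. pos_def (moment_mat \<mu> Q k) k) \<longrightarrow>
           (\<forall>Q\<in>D. \<exists>a :: nat \<Rightarrow> real \<Rightarrow> real.
              (\<forall>l\<in>{1..k}. a l \<in> L2_Qk \<mu> Q k) \<and>
              (\<forall>l\<in>{1..k}. \<forall>m\<in>{1..k}.
                  (LINT x|\<mu>. a l x * a m x) = (if l = m then 1 else 0)) \<and>
              (\<forall>f\<in>L2_Qk \<mu> Q k. \<exists>c :: nat \<Rightarrow> real.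
                  AE x in \<mu>. f x = (\<Sum>l=1..k. c l * a l x)) \<and>
              (\<forall>l\<in>{1..k}. \<forall>i<k. (LINT x|\<mu>. a l x * x ^ i) = 0) \<and>
              (\<forall>l\<in>{2..k}. \<forall>i\<in>{k..k+l-2}. (LINT x|\<mu>. a l x * x ^ i) = 0)))"
proof (intro conjI)
  note pq = per_Q[OF assms]
  have halves: "Q_left Q \<in> D" "Q_right Q \<in> D" if "Q \<in> D" for Q
    using assms(2) that unfolding dyadic_grid_def by blast+
  show "\<forall>Q\<in>D. L2_dim \<mu> (L2_Qk \<mu> Q k) =
            vector_space.dim vscale
              (mat_range (moment_mat \<mu> (Q_left Q) k) k \<inter> mat_range (moment_mat \<mu> (Q_right Q) k) k)"
    using pq(1) by blast
  show "(\<forall>Q\<in>D. L2_dim \<mu> (L2_Qk \<mu> Q k) = k) \<longleftrightarrow> (\<forall>Q\<in>D. pos_def (moment_mat \<mu> Q k) k)"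
  proof
    assume A: "\<forall>Q\<in>D. L2_dim \<mu> (L2_Qk \<mu> Q k) = k"
    show "\<forall>Q\<in>D. pos_def (moment_mat \<mu> Q k) k"
    proof
      fix Q assume Q: "Q \<in> D"
      obtain P where P: "P \<in> D" "Q = Q_left P \<or> Q = Q_right P" using grid_parent[OF assms(2) Q] by blast
      have "pos_def (moment_mat \<mu> (Q_left P) k) k \<and> pos_def (moment_mat \<mu> (Q_right P) k) k"
        using pq(3)[OF P(1)] A P(1) by blast
      then show "pos_def (moment_mat \<mu> Q k) k" using P(2) by blast
    qed
  next
    assume A: "\<forall>Q\<in>D. pos_def (moment_mat \<mu> Q k) k"
    show "\<forall>Q\<in>D. L2_dim \<mu> (L2_Qk \<mu> Q k) = k"
      using pq(2) A halves by blast
  qed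
  show "(\<forall>Q\<in>D. pos_def (moment_mat \<mu> Q k) k) \<longrightarrow>
           (\<forall>Q\<in>D. \<exists>a :: nat \<Rightarrow> real \<Rightarrow> real.
              (\<forall>l\<in>{1..k}. a l \<in> L2_Qk \<mu> Q k) \<and>
              (\<forall>l\<in>{1..k}. \<forall>m\<in>{1..k}.
                  (LINT x|\<mu>. a l x * a m x) = (if l = m then 1 else 0)) \<and>
              (\<forall>f\<in>L2_Qk \<mu> Q k. \<exists>c :: nat \<Rightarrow> real.
                  AE x in \<mu>. f x = (\<Sum>l=1..k. c l * a l x)) \<and>
              (\<forall>l\<in>{1..k}. \<forall>i<k. (LINT x|\<mu>. a l x * x ^ i) = 0) \<and>
              (\<forall>l\<in>{2..k}. \<forall>i\<in>{k..k+l-2}. (LINT x|\<mu>. a l x * x ^ i) = 0))"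
  proof (intro impI ballI)
    fix Q assume A: "\<forall>Q\<in>D. pos_def (moment_mat \<mu> Q k) k" and Q: "Q \<in> D"
    show "\<exists>a :: nat \<Rightarrow> real \<Rightarrow> real.
              (\<forall>l\<in>{1..k}. a l \<in> L2_Qk \<mu> Q k) \<and>
              (\<forall>l\<in>{1..k}. \<forall>m\<in>{1..k}.
                  (LINT x|\<mu>. a l x * a m x) = (if l = m then 1 else 0)) \<and>
              (\<forall>f\<in>L2_Qk \<mu> Q k. \<exists>c :: nat \<Rightarrow> real.
                  AE x in \<mu>. f x = (\<Sum>l=1..k. c l * a l x)) \<and>
              (\<forall>l\<in>{1..k}. \<forall>i<k. (LINT x|\<mu>. a l x * x ^ i) = 0) \<and>
              (\<forall>l\<in>{2..k}. \<forall>i\<in>{k..k+l-2}. (LINT x|\<mu>. a l x * x ^ i) = 0)"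
      by (rule pq(4)[OF Q]) (use A halves[OF Q] in blast)+
  qed
qed


end
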